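(* One has $\sqrt n\,\|\hat p_n-p_0\|_\infty=O_p(1)$ as $n\to\infty$. Furthermore, if $p_0$ has finite support, then $$\sqrt n\,\|F_{\hat p_n}-F_{p_0}\|_\infty=O_p(1)\quad\text{and}\quad \sqrt n\,\|H_{\hat p_n}-H_{p_0}\|_\infty=O_p(1).$$
   Context: Let $\mathbb N=\{0,1,2,\dots\}$. For a real sequence $p$ and $k\ge1$ let $\Delta p(k)=p(k+1)-2p(k)+p(k-1)$; $p$ is convex if $\Delta p(k)\ge0$ for all $k\ge1$; $\mathcal C$ is the set of convex sequences with $\sum_kp(k)^2<\infty$; $\|p\|_\infty=\sup_k|p(k)|$. For a sequence $p$ define $F_p(k)=\sum_{j=0}^kp(j)$ for $k\in\mathbb N$ (with $F_p(-1)=0$) and $H_p(z)=\sum_{k=0}^{z-1}F_p(k)$ for $z\in\mathbb N$ (with $H_p(0)=0$). Let $p_0$ be a convex probability mass function on $\mathbb N$ whose support is either $\mathbb N$ or $\{0,\dots,S\}$ for some integer $S\ge1$. Let $X_1,X_2,\dots$ be i.i.d. with pmf $p_0$, $p_n(j)=\frac1n\sum_{i=1}^n\mathbb 1\{X_i=j\}$, and let $\hat p_n$ be the unique minimizer over $\mathcal C$ of $\frac12\sum_{j\in\mathbb N}(p_n(j)-p(j))^2$. *)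

theory Defs
  imports "HOL-Probability.Probability"
begin

definition convex_seq :: "(nat \<Rightarrow> real) \<Rightarrow> bool" where
  "convex_seq p \<longleftrightarrow> (\<forall>k\<ge>1. p (k+1) - 2 * p k + p (k-1) \<ge> 0)"

definition convC :: "(nat \<Rightarrow> real) set" where
  "convC = {p. convex_seq p \<and> summable (\<lambda>k. (p k)^2)}"

definition sup_norm :: "(nat \<Rightarrow> real) \<Rightarrow> real" where
  "sup_norm p = (SUP k. \<bar>p k\<bar>)"

definition Fcum :: "(nat \<Rightarrow> real) \<Rightarrow> nat \<Rightarrow> real" where
  "Fcum p k = (\<Sum>j\<le>k. p j)"

definition Hcum :: "(nat \<Rightarrow> real) \<Rightarrow> nat \<Rightarrow> real" where
  "Hcum p z = (\<Sum>k<z. Fcum p k)"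

definition emp_pmf :: "(nat \<Rightarrow> 'a \<Rightarrow> nat) \<Rightarrow> nat \<Rightarrow> 'a \<Rightarrow> nat \<Rightarrow> real" where
  "emp_pmf X n w j = real (card {i\<in>{1..n}. X i w = j}) / real n"

definition ls_crit :: "(nat \<Rightarrow> real) \<Rightarrow> (nat \<Rightarrow> real) \<Rightarrow> real" where
  "ls_crit q p = (1/2) * (\<Sum>j. (q j - p j)^2)"

definition conv_lse :: "(nat \<Rightarrow> real) \<Rightarrow> (nat \<Rightarrow> real)" where
  "conv_lse q = (THE p. p \<in> convC \<and> (\<forall>r\<in>convC. ls_crit q p \<le> ls_crit q r))"

text \<open>Stochastic boundedness O_p(1), stated with inner probability (equivalently outer
  probability of the complement) to avoid measurability issues.\<close>
definition bounded_in_prob :: "'a measure \<Rightarrow> (nat \<Rightarrow> 'a \<Rightarrow> real) \<Rightarrow> bool" where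
  "bounded_in_prob M Y \<longleftrightarrow>
     (\<forall>\<epsilon>>0. \<exists>K N. \<forall>n\<ge>N. \<exists>A\<in>sets M.
        A \<subseteq> {w\<in>space M. \<bar>Y n w\<bar> \<le> K} \<and> measure M A \<ge> 1 - \<epsilon>)"

end

theory Submission
  imports Defs
begin


definition l2 :: "(nat \<Rightarrow> real) \<Rightarrow> bool" where
  "l2 p \<longleftrightarrow> summable (\<lambda>k. (p k)^2)"

lemma abs_prod_le: "\<bar>(a::real) * b\<bar> \<le> a^2 + b^2"
proof -
  have "0 \<le> (\<bar>a\<bar> - \<bar>b\<bar>)^2" by simp
  hence "2 * (\<bar>a\<bar> * \<bar>b\<bar>) \<le> a^2 + b^2" by (simp add: power2_diff)
  moreover have "0 \<le> \<bar>a\<bar> * \<bar>b\<bar>" by simp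
  ultimately have "\<bar>a\<bar> * \<bar>b\<bar> \<le> a^2 + b^2" by linarith
  thus ?thesis by (simp add: abs_mult)
qed

lemma l2_prod: assumes "l2 p" "l2 r" shows "summable (\<lambda>k. p k * r k)"
proof (rule summable_comparison_test[where g="\<lambda>k. (p k)^2 + (r k)^2"])
  show "\<exists>N. \<forall>n\<ge>N. norm (p n * r n) \<le> (p n)^2 + (r n)^2"
    using abs_prod_le by auto
  show "summable (\<lambda>k. (p k)^2 + (r k)^2)" using assms unfolding l2_def by (rule summable_add)
qed

lemma l2_diff: assumes "l2 p" "l2 r" shows "l2 (\<lambda>k. p k - r k)"
proof -
  have "summable (\<lambda>k. (p k)^2 - 2 * (p k * r k) + (r k)^2)"
    using assms l2_prod[OF assms] unfolding l2_def
    by (intro summable_add summable_diff summable_mult) auto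
  moreover have "\<And>k. (p k - r k)^2 = (p k)^2 - 2 * (p k * r k) + (r k)^2"
    by (simp add: power2_diff algebra_simps)
  ultimately show ?thesis unfolding l2_def by simp
qed

lemma l2_add: assumes "l2 p" "l2 r" shows "l2 (\<lambda>k. p k + r k)"
proof -
  have "summable (\<lambda>k. (p k)^2 + 2 * (p k * r k) + (r k)^2)"
    using assms l2_prod[OF assms] unfolding l2_def
    by (intro summable_add summable_diff summable_mult) auto
  moreover have "\<And>k. (p k + r k)^2 = (p k)^2 + 2 * (p k * r k) + (r k)^2"
    by (simp add: power2_sum algebra_simps)
  ultimately show ?thesis unfolding l2_def by simp
qed

lemma l2_scale: assumes "l2 p" shows "l2 (\<lambda>k. c * p k)"
  using summable_mult[OF assms[unfolded l2_def], of "c^2"]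
  unfolding l2_def by (simp add: power_mult_distrib)

lemma l2_finite: assumes "\<And>k. k > m \<Longrightarrow> p k = 0" shows "l2 p"
  unfolding l2_def
  by (rule sums_summable[OF sums_finite[of "{..m}"]]) (use assms in auto)

lemma l2_term_le: assumes "l2 p" shows "(p k)^2 \<le> (\<Sum>j. (p j)^2)"
  using sum_le_suminf[of "\<lambda>j. (p j)^2" "{k}"] assms unfolding l2_def by auto

lemma convC_l2: "p \<in> convC \<Longrightarrow> l2 p"
  unfolding convC_def l2_def by auto

lemma convC_iff: "p \<in> convC \<longleftrightarrow> convex_seq p \<and> l2 p"
  unfolding convC_def l2_def by auto

lemma convex_seq_comb:
  assumes "convex_seq p" "convex_seq r" "a \<ge> 0" "b \<ge> 0"
  shows "convex_seq (\<lambda>k. a * p k + b * r k)"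
proof -
  { fix k :: nat assume k: "k \<ge> 1"
    have "p (k+1) - 2 * p k + p (k-1) \<ge> 0" "r (k+1) - 2 * r k + r (k-1) \<ge> 0"
      using assms k unfolding convex_seq_def by auto
    hence "a * (p (k+1) - 2 * p k + p (k-1)) + b * (r (k+1) - 2 * r k + r (k-1)) \<ge> 0"
      using assms(3,4) by (meson add_nonneg_nonneg mult_nonneg_nonneg)
    hence "(a * p (k+1) + b * r (k+1)) - 2 * (a * p k + b * r k) + (a * p (k-1) + b * r (k-1)) \<ge> 0"
      by (simp add: algebra_simps) }
  thus ?thesis unfolding convex_seq_def by auto
qed

lemma suminf3:
  fixes a b c :: "nat \<Rightarrow> real"
  assumes "summable a" "summable b" "summable c"
  shows "(\<Sum>k. x * a k + y * b k - z * c k) = x * suminf a + y * suminf b - z * suminf c"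
proof -
  have "(\<lambda>k. x * a k + y * b k - z * c k) sums (x * suminf a + y * suminf b - z * suminf c)"
    using assms by (intro sums_add sums_diff sums_mult summable_sums)
  thus ?thesis by (rule sums_unique[symmetric])
qed

lemma crit_summable: "l2 q \<Longrightarrow> l2 r \<Longrightarrow> summable (\<lambda>k. (q k - r k)^2)"
  using l2_diff unfolding l2_def by blast

lemma crit_nonneg: "l2 q \<Longrightarrow> l2 r \<Longrightarrow> ls_crit q r \<ge> 0"
  unfolding ls_crit_def using crit_summable by (simp add: suminf_nonneg)

lemma zero_convC: "(\<lambda>_. 0) \<in> convC"
  unfolding convC_def convex_seq_def by simp

lemma exists_min:
  assumes q: "l2 q"
  shows "\<exists>p\<in>convC. \<forall>r\<in>convC. ls_crit q p \<le> ls_crit q r"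
proof -
  define c where "c = Inf (ls_crit q ` convC)"
  have ne: "ls_crit q ` convC \<noteq> {}" using zero_convC by blast
  have bdd: "bdd_below (ls_crit q ` convC)"
    by (rule bdd_belowI[of _ 0]) (use crit_nonneg q convC_l2 in auto)
  have "\<forall>j::nat. \<exists>p\<in>convC. ls_crit q p < c + 1 / (real j + 1)"
  proof
    fix j :: nat
    have "Inf (ls_crit q ` convC) < c + 1 / (real j + 1)" unfolding c_def by simp
    from cInf_lessD[OF ne this] show "\<exists>p\<in>convC. ls_crit q p < c + 1 / (real j + 1)" by auto
  qed
  then obtain P where P: "\<And>j. P j \<in> convC" "\<And>j. ls_crit q (P j) < c + 1 / (real j + 1)"
    by metis
  have cle: "\<And>r. r \<in> convC \<Longrightarrow> c \<le> ls_crit q r"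
    unfolding c_def using bdd by (intro cInf_lower) auto
  have Pl2: "\<And>j. l2 (P j)" using P convC_l2 by blast
  have dist: "(\<Sum>k. (P i k - P j k)^2) \<le> 4 / (real i + 1) + 4 / (real j + 1)" for i j
  proof -
    define m where "m = (\<lambda>k. (1/2) * P i k + (1/2) * P j k)"
    have "l2 (\<lambda>k. (1/2) * P i k + (1/2) * P j k)"
      by (intro l2_add l2_scale Pl2)
    hence mC: "m \<in> convC" unfolding m_def convC_iff
      using P(1)[of i] P(1)[of j] convex_seq_comb[of "P i" "P j" "1/2" "1/2"]
      by (auto simp: convC_iff)
    have "c \<le> ls_crit q m" using cle mC by blast
    have s1: "summable (\<lambda>k. (q k - P i k)^2)" using crit_summable q Pl2 by blast
    have s2: "summable (\<lambda>k. (q k - P j k)^2)" using crit_summable q Pl2 by blast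
    have s3: "summable (\<lambda>k. (q k - m k)^2)" using crit_summable q mC convC_l2 by blast
    have eq: "(\<lambda>k. (P i k - P j k)^2) = (\<lambda>k. 2 * (q k - P i k)^2 + 2 * (q k - P j k)^2 - 4 * (q k - m k)^2)"
      by (rule ext) (simp add: m_def power2_eq_square algebra_simps)
    have "(\<Sum>k. (P i k - P j k)^2) = 2 * (\<Sum>k. (q k - P i k)^2) + 2 * (\<Sum>k. (q k - P j k)^2) - 4 * (\<Sum>k. (q k - m k)^2)"
      unfolding eq using s1 s2 s3 by (rule suminf3)
    also have "\<dots> = 4 * ls_crit q (P i) + 4 * ls_crit q (P j) - 8 * ls_crit q m"
      unfolding ls_crit_def by simp
    also have "\<dots> \<le> 4 / (real i + 1) + 4 / (real j + 1)"
    proof -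
      have "4 * ls_crit q (P i) < 4 * c + 4 / (real i + 1)" using P(2)[of i] by simp
      moreover have "4 * ls_crit q (P j) < 4 * c + 4 / (real j + 1)" using P(2)[of j] by simp
      ultimately show ?thesis using \<open>c \<le> ls_crit q m\<close> by linarith
    qed
    finally show ?thesis .
  qed
  have coord: "\<bar>P i k - P j k\<bar> < e" if "e > 0" "8 / e^2 < real i + 1" "8 / e^2 < real j + 1" for i j k e
  proof -
    have "(P i k - P j k)^2 \<le> (\<Sum>k. (P i k - P j k)^2)"
      using l2_term_le[OF l2_diff[OF Pl2 Pl2]] by blast
    also have "\<dots> \<le> 4 / (real i + 1) + 4 / (real j + 1)" by (rule dist)
    also have "\<dots> < e^2 / 2 + e^2 / 2"
    proof -
      have "4 / (real i + 1) < e^2 / 2" using that by (simp add: field_simps)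
      moreover have "4 / (real j + 1) < e^2 / 2" using that by (simp add: field_simps)
      ultimately show ?thesis by linarith
    qed
    finally have "(P i k - P j k)^2 < e^2" by simp
    thus ?thesis using that(1) by (metis abs_le_square_iff abs_of_pos not_le)
  qed
  have conv: "\<forall>k. convergent (\<lambda>j. P j k)"
  proof
    fix k
    have "Cauchy (\<lambda>j. P j k)"
    proof (rule metric_CauchyI)
      fix e :: real assume e: "e > 0"
      obtain M :: nat where M: "8 / e^2 < real M" using reals_Archimedean2 by blast
      show "\<exists>M. \<forall>m\<ge>M. \<forall>n\<ge>M. dist (P m k) (P n k) < e"
      proof (intro exI allI impI)
        fix m n assume "M \<le> m" "M \<le> n"
        hence "8 / e^2 < real m + 1" "8 / e^2 < real n + 1" using M by auto
        thus "dist (P m k) (P n k) < e" using coord[OF e] by (simp add: dist_real_def)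
      qed
    qed
    thus "convergent (\<lambda>j. P j k)" by (simp add: Cauchy_convergent_iff)
  qed
  define p where "p = (\<lambda>k. lim (\<lambda>j. P j k))"
  have lim: "\<And>k. (\<lambda>j. P j k) \<longlonglongrightarrow> p k" unfolding p_def using conv convergent_LIMSEQ_iff by blast
  have pconv: "convex_seq p"
    unfolding convex_seq_def
  proof (intro allI impI)
    fix k :: nat assume k: "k \<ge> 1"
    have "(\<lambda>j. P j (k+1) - 2 * P j k + P j (k-1)) \<longlonglongrightarrow> p (k+1) - 2 * p k + p (k-1)"
      by (intro tendsto_intros lim)
    moreover have "\<forall>j. 0 \<le> P j (k+1) - 2 * P j k + P j (k-1)"
      using P(1) k unfolding convC_def convex_seq_def by auto
    ultimately show "0 \<le> p (k+1) - 2 * p k + p (k-1)"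
      by (intro LIMSEQ_le_const) auto
  qed
  have part: "(\<Sum>k<N. (q k - p k)^2) \<le> 2 * c" for N
  proof -
    have "(\<lambda>j. \<Sum>k<N. (q k - P j k)^2) \<longlonglongrightarrow> (\<Sum>k<N. (q k - p k)^2)"
      by (intro tendsto_intros lim)
    moreover have "(\<lambda>j. 2 * c + 2 / (real j + 1)) \<longlonglongrightarrow> 2 * c + 2 * 0"
    proof -
      have h: "(\<lambda>j. 1 / (real j + 1)) \<longlonglongrightarrow> 0"
        using LIMSEQ_inverse_real_of_nat by (simp add: inverse_eq_divide add.commute)
      have "(\<lambda>j. 2 * c + 2 * (1 / (real j + 1))) \<longlonglongrightarrow> 2 * c + 2 * 0"
        by (intro tendsto_intros h)
      thus ?thesis by simp
    qed
    moreover have "\<forall>j. (\<Sum>k<N. (q k - P j k)^2) \<le> 2 * c + 2 / (real j + 1)"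
    proof
      fix j
      have "(\<Sum>k<N. (q k - P j k)^2) \<le> (\<Sum>k. (q k - P j k)^2)"
        using crit_summable[OF q Pl2] by (intro sum_le_suminf) auto
      also have "\<dots> = 2 * ls_crit q (P j)" unfolding ls_crit_def by simp
      also have "\<dots> \<le> 2 * c + 2 / (real j + 1)" using P(2)[of j] by simp
      finally show "(\<Sum>k<N. (q k - P j k)^2) \<le> 2 * c + 2 / (real j + 1)" .
    qed
    ultimately show ?thesis by (intro LIMSEQ_le[of _ _ "\<lambda>j. 2 * c + 2 / (real j + 1)"]) auto
  qed
  have sq: "summable (\<lambda>k. (q k - p k)^2)"
    by (rule summableI_nonneg_bounded[OF _ part]) simp
  have "l2 (\<lambda>k. q k - p k)" using sq unfolding l2_def .
  from l2_diff[OF q this] have "l2 (\<lambda>k. q k - (q k - p k))" .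
  hence pl2: "l2 p" by simp
  have pC: "p \<in> convC" using pconv pl2 convC_iff by blast
  have "ls_crit q p \<le> c"
    unfolding ls_crit_def using suminf_le_const[OF sq part] by simp
  thus ?thesis using pC cle by force
qed

lemma VI:
  assumes q: "l2 q" and pC: "p \<in> convC" and pmin: "\<forall>r\<in>convC. ls_crit q p \<le> ls_crit q r"
    and rC: "r \<in> convC"
  shows "(\<Sum>k. (q k - p k) * (r k - p k)) \<le> 0"
proof -
  have pl: "l2 p" and rl: "l2 r" using pC rC convC_l2 by auto
  define A where "A = (\<Sum>k. (q k - p k)^2)"
  define B where "B = (\<Sum>k. (q k - p k) * (r k - p k))"
  define D where "D = (\<Sum>k. (r k - p k)^2)"
  have sA: "summable (\<lambda>k. (q k - p k)^2)" using crit_summable q pl by blast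
  have sD: "summable (\<lambda>k. (r k - p k)^2)" using crit_summable rl pl by blast
  have sB: "summable (\<lambda>k. (q k - p k) * (r k - p k))" using l2_prod l2_diff q pl rl by blast
  have D0: "D \<ge> 0" unfolding D_def using sD by (simp add: suminf_nonneg)
  have key: "2 * t * B \<le> t^2 * D" if t: "0 < t" "t \<le> 1" for t
  proof -
    define pt where "pt = (\<lambda>k. (1 - t) * p k + t * r k)"
    have "convex_seq pt" unfolding pt_def using pC rC t
      by (intro convex_seq_comb) (auto simp: convC_iff)
    moreover have "l2 pt" unfolding pt_def using pl rl by (intro l2_add l2_scale)
    ultimately have ptC: "pt \<in> convC" by (simp add: convC_iff)
    have eq: "(\<lambda>k. (q k - pt k)^2) = (\<lambda>k. 1 * (q k - p k)^2 + (t^2) * (r k - p k)^2 - (2*t) * ((q k - p k) * (r k - p k)))"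
      by (rule ext) (simp add: pt_def power2_eq_square algebra_simps)
    have "ls_crit q pt = (1/2) * (A + t^2 * D - 2 * t * B)"
      unfolding ls_crit_def eq A_def B_def D_def
      by (subst suminf3[OF sA sD sB]) simp
    moreover have "ls_crit q p = (1/2) * A" unfolding ls_crit_def A_def by simp
    ultimately show ?thesis using pmin ptC by force
  qed
  show ?thesis
  proof (rule ccontr)
    assume "\<not> ?thesis"
    hence Bp: "B > 0" unfolding B_def by simp
    define t where "t = min 1 (B / (D + 1))"
    have t0: "0 < t" "t \<le> 1" unfolding t_def using Bp D0 by auto
    have "2 * t * B \<le> t^2 * D" using key[OF t0] .
    hence "2 * B \<le> t * D" using t0 by (simp add: power2_eq_square mult.assoc)
    moreover have "t * D \<le> (B / (D + 1)) * D" unfolding t_def using D0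
      by (intro mult_right_mono) auto
    moreover have "(B / (D + 1)) * D < B" using Bp D0 by (simp add: field_simps)
    ultimately show False using Bp by linarith
  qed
qed

lemma lse:
  assumes q: "l2 q"
  shows "conv_lse q \<in> convC" "\<forall>r\<in>convC. ls_crit q (conv_lse q) \<le> ls_crit q r"
proof -
  have uniq: "p1 = p2" if "p1 \<in> convC" "\<forall>r\<in>convC. ls_crit q p1 \<le> ls_crit q r"
     "p2 \<in> convC" "\<forall>r\<in>convC. ls_crit q p2 \<le> ls_crit q r" for p1 p2
  proof -
    have l1: "l2 p1" and l2': "l2 p2" using that convC_l2 by auto
    have b1: "(\<Sum>k. (q k - p1 k) * (p2 k - p1 k)) \<le> 0" using VI[OF q that(1,2,3)] .
    have b2: "(\<Sum>k. (q k - p2 k) * (p1 k - p2 k)) \<le> 0" using VI[OF q that(3,4,1)] .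
    have s1: "summable (\<lambda>k. (q k - p1 k) * (p2 k - p1 k))" using l2_prod l2_diff q l1 l2' by blast
    have s2: "summable (\<lambda>k. (q k - p2 k) * (p1 k - p2 k))" using l2_prod l2_diff q l1 l2' by blast
    have eq: "(\<lambda>k. (p1 k - p2 k)^2) = (\<lambda>k. (q k - p1 k) * (p2 k - p1 k) + (q k - p2 k) * (p1 k - p2 k))"
      by (rule ext) (simp add: power2_eq_square algebra_simps)
    have "(\<Sum>k. (p1 k - p2 k)^2) \<le> 0"
      unfolding eq using suminf_add[OF s1 s2] b1 b2 by linarith
    hence "(p1 k - p2 k)^2 \<le> 0" for k using l2_term_le[OF l2_diff[OF l1 l2'], of k] by linarith
    hence "p1 k = p2 k" for k by (metis power2_less_eq_zero_iff diff_eq_eq add_0)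
    thus ?thesis by auto
  qed
  have "\<exists>!p. p \<in> convC \<and> (\<forall>r\<in>convC. ls_crit q p \<le> ls_crit q r)"
    using exists_min[OF q] uniq by blast
  from theI'[OF this] show "conv_lse q \<in> convC" "\<forall>r\<in>convC. ls_crit q (conv_lse q) \<le> ls_crit q r"
    unfolding conv_lse_def by auto
qed

lemma lse_VI:
  assumes q: "l2 q" and rC: "r \<in> convC"
  shows "(\<Sum>k. (q k - conv_lse q k) * (r k - conv_lse q k)) \<le> 0"
  using VI[OF q lse[OF q] rC] .

lemma lse_close:
  assumes q: "l2 q" and p0C: "p0 \<in> convC"
  shows "(\<Sum>k. (conv_lse q k - p0 k)^2) \<le> (\<Sum>k. (q k - p0 k)^2)"
proof -
  define p where "p = conv_lse q"
  have pl: "l2 p" unfolding p_def using lse[OF q] convC_l2 by blast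
  have p0l: "l2 p0" using p0C convC_l2 by blast
  have v: "(\<Sum>k. (q k - p k) * (p0 k - p k)) \<le> 0" unfolding p_def using lse_VI[OF q p0C] .
  have s1: "summable (\<lambda>k. (q k - p k) * (p0 k - p k))" using l2_prod l2_diff q pl p0l by blast
  have s2: "summable (\<lambda>k. (q k - p0 k)^2)" using crit_summable q p0l by blast
  have s3: "summable (\<lambda>k. (p k - p0 k)^2)" using crit_summable pl p0l by blast
  have ineq: "(p k - p0 k)^2 \<le> (1/2) * (q k - p0 k)^2 + (1/2) * (p k - p0 k)^2 + 1 * ((q k - p k) * (p0 k - p k))" for k
  proof -
    have "0 \<le> ((q k - p0 k) - (p k - p0 k))^2" by simp
    thus ?thesis by (simp add: power2_eq_square algebra_simps)
  qed
  have "(\<Sum>k. (p k - p0 k)^2) \<le> (\<Sum>k. (1/2) * (q k - p0 k)^2 + (1/2) * (p k - p0 k)^2 + 1 * ((q k - p k) * (p0 k - p k)))"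
    using s1 s2 s3 ineq by (intro suminf_le) (auto intro!: summable_add summable_mult)
  also have "\<dots> = (1/2) * (\<Sum>k. (q k - p0 k)^2) + (1/2) * (\<Sum>k. (p k - p0 k)^2) + (\<Sum>k. (q k - p k) * (p0 k - p k))"
  proof -
    have "(\<lambda>k. (1/2) * (q k - p0 k)^2 + (1/2) * (p k - p0 k)^2 + 1 * ((q k - p k) * (p0 k - p k))) sums
       ((1/2) * (\<Sum>k. (q k - p0 k)^2) + (1/2) * (\<Sum>k. (p k - p0 k)^2) + 1 * (\<Sum>k. (q k - p k) * (p0 k - p k)))"
      using s1 s2 s3 by (intro sums_add sums_mult summable_sums)
    thus ?thesis by (simp add: sums_iff)
  qed
  finally show ?thesis using v unfolding p_def by linarith
qed

lemma lse_coord: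
  assumes q: "l2 q" and p0C: "p0 \<in> convC"
  shows "\<bar>conv_lse q k - p0 k\<bar> \<le> sqrt (\<Sum>k. (q k - p0 k)^2)"
proof -
  have pl: "l2 (conv_lse q)" using lse[OF q] convC_l2 by blast
  have "(conv_lse q k - p0 k)^2 \<le> (\<Sum>k. (conv_lse q k - p0 k)^2)"
    using l2_term_le[OF l2_diff[OF pl convC_l2[OF p0C]]] by blast
  also have "\<dots> \<le> (\<Sum>k. (q k - p0 k)^2)" by (rule lse_close[OF q p0C])
  finally show ?thesis by (simp add: real_le_rsqrt)
qed

lemma convC_lim0:
  assumes "p \<in> convC" shows "p \<longlonglongrightarrow> 0"
proof -
  have "(\<lambda>k. (p k)^2) \<longlonglongrightarrow> 0" using assms convC_l2 unfolding l2_def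
    by (intro summable_LIMSEQ_zero) auto
  hence "(\<lambda>k. sqrt ((p k)^2)) \<longlonglongrightarrow> sqrt 0" by (intro tendsto_real_sqrt)
  hence "(\<lambda>k. \<bar>p k\<bar>) \<longlonglongrightarrow> 0" by simp
  thus ?thesis by (simp add: tendsto_rabs_zero_iff)
qed

lemma convex_D: "convex_seq p \<Longrightarrow> k \<ge> 1 \<Longrightarrow> p (k+1) - 2 * p k + p (k-1) \<ge> 0"
  unfolding convex_seq_def by blast

lemma convC_diff_mono:
  assumes "convex_seq p" shows "p (Suc j) - p j \<le> p (Suc (Suc j)) - p (Suc j)"
  using convex_D[OF assms, of "Suc j"] by simp

lemma convC_diff_mono':
  assumes "convex_seq p" shows "p (Suc j) - p j \<le> p (Suc (j + m)) - p (j + m)"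
proof (induction m)
  case (Suc m) thus ?case using convC_diff_mono[OF assms, of "j + m"] by simp
qed simp

lemma convC_diff_nonpos:
  assumes pC: "p \<in> convC" shows "p (Suc j) - p j \<le> 0"
proof (rule ccontr)
  assume "\<not> ?thesis"
  hence d: "p (Suc j) - p j > 0" by simp
  have cv: "convex_seq p" using pC convC_iff by blast
  have grow: "p (j + m) \<ge> p j + m * (p (Suc j) - p j)" for m
  proof (induction m)
    case (Suc m)
    have "p (Suc j) - p j \<le> p (Suc (j + m)) - p (j + m)" by (rule convC_diff_mono'[OF cv])
    thus ?case using Suc by (simp add: algebra_simps)
  qed simp
  from convC_lim0[OF pC] have "\<exists>N. \<forall>n\<ge>N. \<bar>p n\<bar> < 1"
    unfolding LIMSEQ_def dist_real_def by (metis diff_zero zero_less_one)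
  then obtain N where N: "\<And>n. n \<ge> N \<Longrightarrow> \<bar>p n\<bar> < 1" by blast
  obtain m :: nat where m: "(1 - p j) / (p (Suc j) - p j) < real m" "N \<le> m"
    using reals_Archimedean2 by (metis max.cobounded1 max.cobounded2 nat_le_real_less of_nat_le_iff order_less_le_trans)
  have "1 - p j < m * (p (Suc j) - p j)" using m(1) d by (simp add: field_simps)
  hence "p (j + m) > 1" using grow[of m] by linarith
  moreover have "\<bar>p (j + m)\<bar> < 1" using N m(2) by simp
  ultimately show False by simp
qed

lemma convC_nonneg:
  assumes pC: "p \<in> convC" shows "p k \<ge> 0"
proof -
  have "decseq p" by (rule decseq_SucI) (use convC_diff_nonpos[OF pC] in fastforce)
  from decseq_ge[OF this convC_lim0[OF pC]] show ?thesis .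
qed

lemma knot_exists:
  assumes pC: "p \<in> convC" and pk: "p k > 0"
  shows "\<exists>z>k. p (z+1) - 2 * p z + p (z-1) > 0"
proof (rule ccontr)
  assume "\<not> ?thesis"
  hence flat: "\<And>z. z > k \<Longrightarrow> p (z+1) - 2 * p z + p (z-1) \<le> 0" by auto
  have cv: "convex_seq p" using pC convC_iff by blast
  have deq: "p (Suc (k + m)) - p (k + m) = p (Suc k) - p k" for m
  proof (induction m)
    case (Suc m)
    have "p (Suc (k + m) + 1) - 2 * p (Suc (k + m)) + p (Suc (k + m) - 1) \<le> 0" by (rule flat) simp
    moreover have "p (Suc (k + m) + 1) - 2 * p (Suc (k + m)) + p (Suc (k + m) - 1) \<ge> 0"
      by (rule convex_D[OF cv]) simp
    ultimately show ?case using Suc by simp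
  qed simp
  have lin: "p (k + m) = p k + m * (p (Suc k) - p k)" for m
  proof (induction m)
    case (Suc m) thus ?case using deq[of m] by (simp add: algebra_simps)
  qed simp
  define d where "d = p (Suc k) - p k"
  have d0: "d \<le> 0" unfolding d_def by (rule convC_diff_nonpos[OF pC])
  show False
  proof (cases "d = 0")
    case True
    hence "\<forall>m. p (k + m) = p k" using lin unfolding d_def by simp
    moreover have "(\<lambda>m. p (k + m)) \<longlonglongrightarrow> 0"
      using LIMSEQ_ignore_initial_segment[OF convC_lim0[OF pC], of k] by (simp add: add.commute)
    ultimately have "(\<lambda>m. p k) \<longlonglongrightarrow> 0" by simp
    hence "p k = 0" by (simp add: LIMSEQ_const_iff)
    thus False using pk by simp
  next
    case False
    hence dn: "d < 0" using d0 by simp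
    obtain m :: nat where m: "p k / (- d) < real m" using reals_Archimedean2 by blast
    have "p k < m * (- d)" using m dn by (simp add: field_simps)
    hence "p (k + m) < 0" using lin[of m] unfolding d_def by (simp add: algebra_simps)
    thus False using convC_nonneg[OF pC] by (metis not_le)
  qed
qed

definition ind_le :: "nat \<Rightarrow> nat \<Rightarrow> real" where
  "ind_le m k = (if k \<le> m then 1 else 0)"

lemma ind_le_D:
  assumes "k \<ge> 1"
  shows "ind_le m (k+1) - 2 * ind_le m k + ind_le m (k-1) = (if k = m then -1 else if k = m+1 then 1 else 0)"
  using assms unfolding ind_le_def by auto

lemma pert_C:
  assumes pC: "p \<in> convC"
    and ok: "\<And>k. k \<ge> 1 \<Longrightarrow> 0 \<le> (p (k+1) - 2 * p k + p (k-1)) + c * (if k = m then -1 else if k = m+1 then 1 else 0)"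
  shows "(\<lambda>k. p k + c * ind_le m k) \<in> convC"
proof -
  have "l2 (\<lambda>k. p k + c * ind_le m k)"
  proof (rule l2_add[OF convC_l2[OF pC] l2_scale])
    show "l2 (ind_le m)" by (rule l2_finite[of m]) (auto simp: ind_le_def)
  qed
  moreover have "convex_seq (\<lambda>k. p k + c * ind_le m k)"
    unfolding convex_seq_def
  proof (intro allI impI)
    fix k :: nat assume k: "k \<ge> 1"
    have "(p (k+1) + c * ind_le m (k+1)) - 2 * (p k + c * ind_le m k) + (p (k-1) + c * ind_le m (k-1))
        = (p (k+1) - 2 * p k + p (k-1)) + c * (ind_le m (k+1) - 2 * ind_le m k + ind_le m (k-1))"
      by (simp add: algebra_simps)
    also have "\<dots> \<ge> 0" using ok[OF k] ind_le_D[OF k] by simp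
    finally show "0 \<le> (p (k+1) + c * ind_le m (k+1)) - 2 * (p k + c * ind_le m k) + (p (k-1) + c * ind_le m (k-1))" .
  qed
  ultimately show ?thesis by (simp add: convC_iff)
qed

lemma pert_ineq:
  assumes q: "l2 q" and rC: "(\<lambda>k. conv_lse q k + c * ind_le m k) \<in> convC"
  shows "c * (Fcum q m - Fcum (conv_lse q) m) \<le> 0"
proof -
  define p where "p = conv_lse q"
  have v: "(\<Sum>k. (q k - p k) * ((p k + c * ind_le m k) - p k)) \<le> 0"
    using lse_VI[OF q rC] unfolding p_def by simp
  have "(\<lambda>k. (q k - p k) * ((p k + c * ind_le m k) - p k)) sums (\<Sum>k\<in>{..m}. (q k - p k) * ((p k + c * ind_le m k) - p k))"
    by (rule sums_finite) (auto simp: ind_le_def)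
  moreover have "(\<Sum>k\<in>{..m}. (q k - p k) * ((p k + c * ind_le m k) - p k)) = c * (Fcum q m - Fcum p m)"
    unfolding Fcum_def by (simp add: ind_le_def sum_distrib_left sum_subtractf algebra_simps)
  ultimately show ?thesis using v unfolding p_def by (simp add: sums_iff)
qed

lemma knot_a:
  assumes q: "l2 q" and z: "z \<ge> 1"
    and kn: "conv_lse q (z+1) - 2 * conv_lse q z + conv_lse q (z-1) > 0"
  shows "Fcum (conv_lse q) (z-1) \<le> Fcum q (z-1)"
proof -
  define p where "p = conv_lse q"
  define e where "e = p (z+1) - 2 * p z + p (z-1)"
  have pC: "p \<in> convC" unfolding p_def using lse[OF q] by blast
  have cv: "convex_seq p" using pC convC_iff by blast
  have "(\<lambda>k. p k + (-e) * ind_le (z-1) k) \<in> convC"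
  proof (rule pert_C[OF pC])
    fix k :: nat assume k: "k \<ge> 1"
    have "p (k+1) - 2 * p k + p (k-1) \<ge> 0" by (rule convex_D[OF cv k])
    moreover have "k = z \<Longrightarrow> p (k+1) - 2 * p k + p (k-1) = e" unfolding e_def by simp
    ultimately show "0 \<le> (p (k+1) - 2 * p k + p (k-1)) + (-e) * (if k = z-1 then -1 else if k = z-1+1 then 1 else 0)"
      using kn z unfolding e_def p_def by auto
  qed
  from pert_ineq[OF q this[unfolded p_def]] have "(-e) * (Fcum q (z-1) - Fcum p (z-1)) \<le> 0" unfolding p_def .
  moreover have "e > 0" using kn unfolding e_def p_def .
  ultimately show ?thesis unfolding p_def by (simp add: zero_le_mult_iff)
qed

lemma knot_b:
  assumes q: "l2 q" and z: "z \<ge> 1"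
    and kn: "conv_lse q (z+1) - 2 * conv_lse q z + conv_lse q (z-1) > 0"
  shows "Fcum q z \<le> Fcum (conv_lse q) z"
proof -
  define p where "p = conv_lse q"
  define e where "e = p (z+1) - 2 * p z + p (z-1)"
  have pC: "p \<in> convC" unfolding p_def using lse[OF q] by blast
  have cv: "convex_seq p" using pC convC_iff by blast
  have "(\<lambda>k. p k + e * ind_le z k) \<in> convC"
  proof (rule pert_C[OF pC])
    fix k :: nat assume k: "k \<ge> 1"
    have "p (k+1) - 2 * p k + p (k-1) \<ge> 0" by (rule convex_D[OF cv k])
    moreover have "k = z \<Longrightarrow> p (k+1) - 2 * p k + p (k-1) = e" unfolding e_def by simp
    ultimately show "0 \<le> (p (k+1) - 2 * p k + p (k-1)) + e * (if k = z then -1 else if k = z+1 then 1 else 0)"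
      using kn z unfolding e_def p_def by auto
  qed
  from pert_ineq[OF q this[unfolded p_def]] have "e * (Fcum q z - Fcum p z) \<le> 0" unfolding p_def .
  moreover have "e > 0" using kn unfolding e_def p_def .
  ultimately show ?thesis unfolding p_def by (simp add: mult_le_0_iff)
qed



lemma Fcum_Suc: "Fcum f (Suc k) = Fcum f k + f (Suc k)"
  unfolding Fcum_def by simp

lemma Fcum_split:
  assumes "a \<le> b" shows "Fcum f b = Fcum f a + (\<Sum>j\<in>{a<..b}. f j)"
  using assms
proof (induction b rule: dec_induct)
  case (step n)
  have "{a<..Suc n} = insert (Suc n) {a<..n}" using step by auto
  thus ?case using step by (simp add: Fcum_Suc)
qed simp

lemma Fcum_const:
  assumes "\<forall>k>S. f k = 0" "k \<ge> S" shows "Fcum f k = Fcum f S"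
  using Fcum_split[OF assms(2), of f] assms(1) by simp

lemma part2_det:
  assumes q: "l2 q" and qS: "\<forall>k>S. q k = 0" and qF: "Fcum q S = 1"
    and p0S: "\<forall>k>S. p0 k = 0" and p0pos: "3 * \<delta> < p0 S"
    and close: "\<forall>k. \<bar>conv_lse q k - p0 k\<bar> \<le> \<delta>"
  shows "\<forall>k\<ge>S+1. Fcum (conv_lse q) k = 1"
proof -
  define p where "p = conv_lse q"
  have pC: "p \<in> convC" unfolding p_def using lse[OF q] by blast
  have cv: "convex_seq p" using pC convC_iff by blast
  have pnn: "\<And>k. p k \<ge> 0" using convC_nonneg[OF pC] .
  have Fq: "Fcum q k = 1" if "k \<ge> S" for k
    using Fcum_const[OF qS that] qF by (rule trans)
  have cl: "\<And>k. \<bar>p k - p0 k\<bar> \<le> \<delta>" using close unfolding p_def by blast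
  have kn1: "p (S+1+1) - 2 * p (S+1) + p (S+1-1) > 0"
  proof (rule ccontr)
    assume "\<not> ?thesis"
    moreover have "p (S+1+1) - 2 * p (S+1) + p (S+1-1) \<ge> 0" by (rule convex_D[OF cv]) simp
    ultimately have eq: "p (S+2) - 2 * p (S+1) + p S = 0" by (simp add: numeral_2_eq_2)
    have "p (S+1) \<le> \<delta>" using cl[of "S+1"] p0S by simp
    moreover have "p S \<ge> p0 S - \<delta>" using cl[of S] by simp
    moreover have "p (S+2) \<ge> 0" by (rule pnn)
    ultimately show False using eq p0pos by linarith
  qed
  have b1: "Fcum p (S+1) \<ge> 1"
    using knot_b[OF q _ kn1[unfolded p_def]] Fq[of "S+1"] unfolding p_def by simp
  have zero: "p k = 0" if k: "k \<ge> S+2" for k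
  proof (rule ccontr)
    assume "p k \<noteq> 0"
    hence pk: "p k > 0" using pnn[of k] by simp
    obtain z where z: "z > k" "p (z+1) - 2 * p z + p (z-1) > 0" using knot_exists[OF pC pk] by blast
    have "Fcum p (z-1) \<le> Fcum q (z-1)" using knot_a[OF q _ z(2)[unfolded p_def]] z k unfolding p_def by simp
    also have "\<dots> = 1" using Fq z k by simp
    finally have le1: "Fcum p (z-1) \<le> 1" .
    have "Fcum p (z-1) = Fcum p (S+1) + (\<Sum>j\<in>{S+1<..z-1}. p j)"
      by (rule Fcum_split) (use z k in simp)
    moreover have "p k \<le> (\<Sum>j\<in>{S+1<..z-1}. p j)"
      by (rule member_le_sum) (use z k pnn in auto)
    ultimately show False using le1 b1 pk by linarith
  qed
  have a1: "Fcum p (S+1) \<le> 1"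
  proof (cases "p (S+1) = 0")
    case True
    have kn: "p (S+1+1) - 2 * p (S+1) + p (S+1-1) > 0" using kn1 .
    have "Fcum p S \<le> Fcum q S" using knot_a[OF q _ kn[unfolded p_def]] unfolding p_def by simp
    thus ?thesis using True qF by (simp add: Fcum_Suc)
  next
    case False
    hence "p (S+1) > 0" using pnn[of "S+1"] by simp
    moreover have "p (S+2) = 0" "p (S+3) = 0" using zero by auto
    ultimately have kn: "p (S+2+1) - 2 * p (S+2) + p (S+2-1) > 0" by (simp add: numeral_3_eq_3 numeral_2_eq_2)
    have "Fcum p (S+2-1) \<le> Fcum q (S+2-1)" using knot_a[OF q _ kn[unfolded p_def]] unfolding p_def by simp
    thus ?thesis using Fq[of "S+1"] by simp
  qed
  have z': "\<forall>k>S+1. p k = 0" using zero by simp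
  show ?thesis
  proof (intro allI impI)
    fix k assume k: "k \<ge> S+1"
    have "Fcum p k = Fcum p (S+1)" by (rule Fcum_const[OF z' k])
    thus "Fcum (conv_lse q) k = 1" using a1 b1 unfolding p_def by linarith
  qed
qed



lemma sup_norm_le:
  assumes "\<forall>k. \<bar>f k\<bar> \<le> B"
  shows "\<bar>sqrt (real n) * sup_norm f\<bar> \<le> sqrt (real n) * B"
proof -
  have bdd: "bdd_above (range (\<lambda>k. \<bar>f k\<bar>))" using assms by (intro bdd_aboveI2) auto
  have "\<bar>f 0\<bar> \<le> sup_norm f" unfolding sup_norm_def by (rule cSUP_upper[OF _ bdd]) simp
  hence nn: "0 \<le> sup_norm f" by linarith
  have "sup_norm f \<le> B" unfolding sup_norm_def using assms by (intro cSUP_least) auto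
  thus ?thesis using nn by (simp add: abs_mult mult_left_mono)
qed

lemma F_H_bounds:
  assumes cl: "\<forall>k. \<bar>p k - p0 k\<bar> \<le> \<delta>" and Fp: "\<forall>k\<ge>S+1. Fcum p k = 1"
    and Fp0: "\<forall>k\<ge>S. Fcum p0 k = 1"
  shows "\<forall>k. \<bar>Fcum p k - Fcum p0 k\<bar> \<le> (real S + 1) * \<delta>"
    "\<forall>z. \<bar>Hcum p z - Hcum p0 z\<bar> \<le> (real S + 1) * ((real S + 1) * \<delta>)"
proof -
  have d0: "\<delta> \<ge> 0" using cl by (meson abs_ge_zero order_trans)
  have Fb: "\<bar>Fcum p k - Fcum p0 k\<bar> \<le> (real S + 1) * \<delta>" for k
  proof (cases "k \<le> S")
    case True
    have "\<bar>Fcum p k - Fcum p0 k\<bar> = \<bar>\<Sum>j\<le>k. (p j - p0 j)\<bar>" unfolding Fcum_def by (simp add: sum_subtractf)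
    also have "\<dots> \<le> (\<Sum>j\<le>k. \<bar>p j - p0 j\<bar>)" by (rule sum_abs)
    also have "\<dots> \<le> of_nat (card {..k}) * \<delta>" by (rule sum_bounded_above) (use cl in auto)
    also have "\<dots> = (real k + 1) * \<delta>" by simp
    also have "\<dots> \<le> (real S + 1) * \<delta>" using True d0 by (intro mult_right_mono) auto
    finally show ?thesis .
  next
    case False
    thus ?thesis using Fp Fp0 d0 by simp
  qed
  thus "\<forall>k. \<bar>Fcum p k - Fcum p0 k\<bar> \<le> (real S + 1) * \<delta>" by blast
  have Hb: "\<bar>Hcum p z - Hcum p0 z\<bar> \<le> real (min z (S+1)) * ((real S + 1) * \<delta>)" for z
  proof (induction z)
    case 0 thus ?case by (simp add: Hcum_def)
  next
    case (Suc z)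
    have eq: "Hcum p (Suc z) - Hcum p0 (Suc z) = (Hcum p z - Hcum p0 z) + (Fcum p z - Fcum p0 z)"
      unfolding Hcum_def by simp
    show ?case
    proof (cases "z \<le> S")
      case True
      hence "min (Suc z) (S+1) = Suc (min z (S+1))" by simp
      thus ?thesis using Suc Fb[of z] eq by (simp add: algebra_simps)
    next
      case False
      hence "Fcum p z - Fcum p0 z = 0" using Fp Fp0 by simp
      moreover have "min (Suc z) (S+1) = min z (S+1)" using False by simp
      ultimately show ?thesis using Suc eq by simp
    qed
  qed
  show "\<forall>z. \<bar>Hcum p z - Hcum p0 z\<bar> \<le> (real S + 1) * ((real S + 1) * \<delta>)"
  proof
    fix z
    have "real (min z (S+1)) \<le> real S + 1" by simp
    hence "real (min z (S+1)) * ((real S + 1) * \<delta>) \<le> (real S + 1) * ((real S + 1) * \<delta>)"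
      using d0 by (intro mult_right_mono) auto
    thus "\<bar>Hcum p z - Hcum p0 z\<bar> \<le> (real S + 1) * ((real S + 1) * \<delta>)" using Hb[of z] by linarith
  qed
qed

locale setting = prob_space M for M :: "'a measure" +
  fixes X :: "nat \<Rightarrow> 'a \<Rightarrow> nat" and p0 :: "nat \<Rightarrow> real"
  assumes X_meas[measurable]: "\<And>i. X i \<in> measurable M (count_space UNIV)"
    and X_indep: "indep_vars (\<lambda>_. count_space UNIV) X UNIV"
    and X_dist: "\<And>i j. measure M {w\<in>space M. X i w = j} = p0 j"
begin

definition ind :: "nat \<Rightarrow> nat \<Rightarrow> 'a \<Rightarrow> real" where
  "ind i j w = (if X i w = j then 1 else 0)"

lemma ind_meas[measurable]: "ind i j \<in> borel_measurable M"
  unfolding ind_def by measurable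

lemma bounded_integrable:
  fixes f :: "'a \<Rightarrow> real"
  assumes "f \<in> borel_measurable M" "\<And>w. w \<in> space M \<Longrightarrow> \<bar>f w\<bar> \<le> B"
  shows "integrable M f"
  by (rule integrable_const_bound[where B=B]) (use assms in auto)

lemma ind_int[simp]: "integrable M (ind i j)"
  by (rule bounded_integrable[where B=1]) (auto simp: ind_def)

lemma ind_prod_int[simp]: "integrable M (\<lambda>w. ind i j w * ind i' j w)"
  by (rule bounded_integrable[where B=1]) (auto simp: ind_def)

lemma E_ind: "expectation (ind i j) = p0 j"
proof -
  have "expectation (ind i j) = expectation (indicator {w\<in>space M. X i w = j})"
    by (rule Bochner_Integration.integral_cong) (auto simp: ind_def indicator_def)
  also have "\<dots> = p0 j" using X_dist by simp
  finally show ?thesis .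
qed

lemma E_ind_same: "expectation (\<lambda>w. ind i j w * ind i j w) = p0 j"
proof -
  have "expectation (\<lambda>w. ind i j w * ind i j w) = expectation (ind i j)"
    by (rule Bochner_Integration.integral_cong) (auto simp: ind_def)
  thus ?thesis using E_ind by simp
qed

lemma E_ind_diff:
  assumes "i \<noteq> i'" shows "expectation (\<lambda>w. ind i j w * ind i' j w) = (p0 j)^2"
proof -
  have "expectation (\<lambda>w. ind i j w * ind i' j w) = expectation (indicator (\<Inter>k\<in>{i,i'}. X k -` {j} \<inter> space M))"
    by (rule Bochner_Integration.integral_cong) (auto simp: ind_def indicator_def)
  also have "\<dots> = prob (\<Inter>k\<in>{i,i'}. X k -` {j} \<inter> space M)"
    by (simp add: Int_absorb2 sets.Int_space_eq2)
  also have "\<dots> = (\<Prod>k\<in>{i,i'}. prob (X k -` {j} \<inter> space M))"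
    using X_indep by (intro indep_varsD) auto
  also have "\<dots> = (p0 j)^2"
  proof -
    have "\<And>k. prob (X k -` {j} \<inter> space M) = p0 j"
      using X_dist by (simp add: vimage_def Int_def conj_commute)
    thus ?thesis using assms by (simp add: power2_eq_square)
  qed
  finally show ?thesis .
qed

lemma emp_eq: "emp_pmf X n w j = (\<Sum>i\<in>{1..n}. ind i j w) / real n"
proof -
  have "card {i\<in>{1..n}. X i w = j} = (\<Sum>i\<in>{i\<in>{1..n}. X i w = j}. (1::nat))" by simp
  also have "\<dots> = (\<Sum>i\<in>{1..n}. if X i w = j then 1 else 0)" by (rule sum.inter_filter) simp
  finally have "real (card {i\<in>{1..n}. X i w = j}) = real (\<Sum>i\<in>{1..n}. if X i w = j then 1 else 0)"
    by simp
  also have "\<dots> = (\<Sum>i\<in>{1..n}. real (if X i w = j then 1 else 0))" by (rule of_nat_sum)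
  also have "\<dots> = (\<Sum>i\<in>{1..n}. ind i j w)" by (rule sum.cong) (auto simp: ind_def)
  finally have "real (card {i\<in>{1..n}. X i w = j}) = (\<Sum>i\<in>{1..n}. ind i j w)" .
  thus ?thesis unfolding emp_pmf_def by simp
qed

lemma emp_meas[measurable]: "(\<lambda>w. emp_pmf X n w j) \<in> borel_measurable M"
  unfolding emp_eq by measurable

lemma E_sq:
  assumes n: "n \<ge> 1"
  shows "expectation (\<lambda>w. (emp_pmf X n w j - p0 j)^2) = p0 j * (1 - p0 j) / real n"
proof -
  define p where "p = p0 j"
  define Sn where "Sn = (\<lambda>w. \<Sum>i\<in>{1..n}. ind i j w)"
  have Sn_int: "integrable M Sn" unfolding Sn_def by (intro Bochner_Integration.integrable_sum) simp
  have Sn2: "(\<lambda>w. (Sn w)^2) = (\<lambda>w. \<Sum>i\<in>{1..n}. \<Sum>i'\<in>{1..n}. ind i j w * ind i' j w)"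
    unfolding Sn_def by (rule ext) (simp add: power2_eq_square sum_product)
  have Sn2_int: "integrable M (\<lambda>w. (Sn w)^2)" unfolding Sn2
    by (intro Bochner_Integration.integrable_sum) simp
  have ESn: "expectation Sn = real n * p"
    unfolding Sn_def p_def by (simp add: Bochner_Integration.integral_sum E_ind)
  have inner: "(\<Sum>i'\<in>{1..n}. expectation (\<lambda>w. ind i j w * ind i' j w)) = p + (real n - 1) * p^2"
    if i: "i \<in> {1..n}" for i
  proof -
    have "(\<Sum>i'\<in>{1..n}. expectation (\<lambda>w. ind i j w * ind i' j w))
        = (\<Sum>i'\<in>{1..n}. p^2 + (if i' = i then p - p^2 else 0))"
      by (rule sum.cong) (auto simp: E_ind_same E_ind_diff p_def)
    also have "\<dots> = real n * p^2 + (p - p^2)"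
      using i by (simp add: sum.distrib sum.delta')
    finally show ?thesis by (simp add: algebra_simps)
  qed
  have ESn2: "expectation (\<lambda>w. (Sn w)^2) = real n * (p + (real n - 1) * p^2)"
  proof -
    have "expectation (\<lambda>w. (Sn w)^2) = (\<Sum>i\<in>{1..n}. \<Sum>i'\<in>{1..n}. expectation (\<lambda>w. ind i j w * ind i' j w))"
      unfolding Sn2 by (simp add: Bochner_Integration.integral_sum)
    also have "\<dots> = (\<Sum>i\<in>{1..n}. p + (real n - 1) * p^2)" by (rule sum.cong[OF refl inner])
    finally show ?thesis by simp
  qed
  have eq: "(\<lambda>w. (emp_pmf X n w j - p0 j)^2) = (\<lambda>w. (1 / (real n)^2) * (Sn w)^2 - (2 * p / real n) * Sn w + p^2)"
    by (rule ext) (simp add: emp_eq Sn_def p_def power2_diff power_divide field_simps)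
  have "expectation (\<lambda>w. (emp_pmf X n w j - p0 j)^2) =
      (1 / (real n)^2) * expectation (\<lambda>w. (Sn w)^2) - (2 * p / real n) * expectation Sn + p^2"
    unfolding eq using Sn_int Sn2_int prob_space by simp
  also have "\<dots> = p * (1 - p) / real n"
    unfolding ESn ESn2 using n by (simp add: field_simps power2_eq_square)
  finally show ?thesis unfolding p_def .
qed

definition Dn :: "nat \<Rightarrow> 'a \<Rightarrow> real" where
  "Dn n w = (\<Sum>j. (emp_pmf X n w j - p0 j)^2)"

lemma emp_range: assumes n: "n \<ge> 1" shows "0 \<le> emp_pmf X n w j" "emp_pmf X n w j \<le> 1"
proof -
  have "card {i\<in>{1..n}. X i w = j} \<le> card {1..n}" by (rule card_mono) auto
  thus "0 \<le> emp_pmf X n w j" "emp_pmf X n w j \<le> 1" using n unfolding emp_pmf_def by (auto simp: field_simps)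
qed

lemma emp_l2: "l2 (emp_pmf X n w)"
proof (rule l2_finite)
  fix k assume k: "k > Max (insert 0 ((\<lambda>i. X i w) ` {1..n}))"
  have "\<forall>i\<in>{1..n}. X i w \<noteq> k"
  proof
    fix i assume "i \<in> {1..n}"
    hence "X i w \<le> Max (insert 0 ((\<lambda>i. X i w) ` {1..n}))" by (intro Max_ge) auto
    hence "X i w < k" using k by linarith
    thus "X i w \<noteq> k" by simp
  qed
  hence "{i\<in>{1..n}. X i w = k} = {}" by auto
  thus "emp_pmf X n w k = 0" unfolding emp_pmf_def by simp
qed

end

lemma p0_facts:
  assumes nn: "\<And>j. p0 j \<ge> (0::real)" and s: "p0 sums 1"
  shows "\<And>j. p0 j \<le> 1" "l2 p0"
proof -
  show le: "\<And>j. p0 j \<le> 1"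
  proof -
    fix j
    have "sum p0 {j} \<le> suminf p0" using nn s by (intro sum_le_suminf) (auto simp: sums_iff)
    thus "p0 j \<le> 1" using s by (simp add: sums_iff)
  qed
  show "l2 p0" unfolding l2_def
  proof (rule summable_comparison_test[where g=p0])
    show "\<exists>N. \<forall>n\<ge>N. norm ((p0 n)^2) \<le> p0 n"
      using nn le by (auto simp: power2_eq_square intro!: mult_left_le)
    show "summable p0" using s by (simp add: sums_iff)
  qed
qed

context setting
begin

lemma Dn_meas[measurable]: "Dn n \<in> borel_measurable M"
  unfolding Dn_def by measurable

lemma Dn_summable:
  assumes nn: "\<And>j. p0 j \<ge> 0" and s: "p0 sums 1"
  shows "summable (\<lambda>j. (emp_pmf X n w j - p0 j)^2)"
  using crit_summable[OF emp_l2 p0_facts(2)[OF nn s]] .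

lemma ED:
  assumes n: "n \<ge> 1" and nn: "\<And>j. p0 j \<ge> 0" and s: "p0 sums 1"
  shows "(\<integral>\<^sup>+w. ennreal (Dn n w) \<partial>M) \<le> ennreal (1 / real n)"
proof -
  have "(\<integral>\<^sup>+w. ennreal (Dn n w) \<partial>M) = (\<integral>\<^sup>+w. (\<Sum>j. ennreal ((emp_pmf X n w j - p0 j)^2)) \<partial>M)"
    unfolding Dn_def by (rule nn_integral_cong) (simp add: suminf_ennreal2 Dn_summable[OF nn s])
  also have "\<dots> = (\<Sum>j. (\<integral>\<^sup>+w. ennreal ((emp_pmf X n w j - p0 j)^2) \<partial>M))"
    by (rule nn_integral_suminf) measurable
  also have "\<dots> = (\<Sum>j. ennreal (p0 j * (1 - p0 j) / real n))"
  proof (rule suminf_cong)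
    fix j
    have int: "integrable M (\<lambda>w. (emp_pmf X n w j - p0 j)^2)"
    proof (rule bounded_integrable[where B=1])
      fix w
      have "0 \<le> emp_pmf X n w j" "emp_pmf X n w j \<le> 1" using emp_range[OF n] by auto
      moreover have "0 \<le> p0 j" "p0 j \<le> 1" using nn p0_facts(1)[OF nn s] by auto
      ultimately have "\<bar>emp_pmf X n w j - p0 j\<bar> \<le> 1" by linarith
      hence "\<bar>emp_pmf X n w j - p0 j\<bar>^2 \<le> 1" by (intro power_le_one) auto
      thus "\<bar>(emp_pmf X n w j - p0 j)^2\<bar> \<le> 1" by simp
    qed measurable
    show "(\<integral>\<^sup>+w. ennreal ((emp_pmf X n w j - p0 j)^2) \<partial>M) = ennreal (p0 j * (1 - p0 j) / real n)"
      using nn_integral_eq_integral[OF int] E_sq[OF n] by simp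
  qed
  also have "\<dots> \<le> (\<Sum>j. ennreal (p0 j / real n))"
  proof (intro suminf_le summableI)
    fix j
    have "p0 j * (1 - p0 j) / real n \<le> p0 j / real n"
      using nn[of j] n by (simp add: divide_right_mono mult_left_le)
    thus "ennreal (p0 j * (1 - p0 j) / real n) \<le> ennreal (p0 j / real n)"
      by (intro ennreal_leI)
  qed
  also have "\<dots> = ennreal (\<Sum>j. p0 j / real n)"
    using nn s by (intro suminf_ennreal2) (auto simp: sums_iff intro: summable_divide)
  also have "(\<Sum>j. p0 j / real n) = 1 / real n"
    using s by (simp add: sums_iff suminf_divide)
  finally show ?thesis .
qed

lemma markov:
  assumes n: "n \<ge> 1" and nn: "\<And>j. p0 j \<ge> 0" and s: "p0 sums 1" and K: "K > 0"
  shows "{w\<in>space M. real n * Dn n w \<le> K^2} \<in> events"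
    "prob {w\<in>space M. real n * Dn n w \<le> K^2} \<ge> 1 - 1 / K^2"
proof -
  show ev: "{w\<in>space M. real n * Dn n w \<le> K^2} \<in> events" by measurable
  define B where "B = {w\<in>space M. K^2 < real n * Dn n w}"
  have evB: "B \<in> events" unfolding B_def by measurable
  define c where "c = ennreal (real n / K^2)"
  have Dnn: "\<And>w. Dn n w \<ge> 0" unfolding Dn_def using Dn_summable[OF nn s] by (simp add: suminf_nonneg)
  have sub: "B \<subseteq> {w\<in>space M. 1 \<le> c * ennreal (Dn n w)}"
  proof
    fix w assume "w \<in> B"
    hence w: "w \<in> space M" "K^2 < real n * Dn n w" unfolding B_def by auto
    have "1 \<le> real n / K^2 * Dn n w" using w(2) K by (simp add: field_simps)
    hence "ennreal 1 \<le> ennreal (real n / K^2 * Dn n w)" by (intro ennreal_leI)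
    also have "\<dots> = c * ennreal (Dn n w)" unfolding c_def by (rule ennreal_mult''[OF Dnn])
    finally show "w \<in> {w\<in>space M. 1 \<le> c * ennreal (Dn n w)}" using w by simp
  qed
  have "emeasure M B \<le> emeasure M {w\<in>space M. 1 \<le> c * ennreal (Dn n w)}"
    by (rule emeasure_mono[OF sub]) measurable
  also have "\<dots> \<le> c * (\<integral>\<^sup>+w. ennreal (Dn n w) * indicator (space M) w \<partial>M)"
    using nn_integral_Markov_inequality[of "\<lambda>w. ennreal (Dn n w)" "space M" M c] by simp
  also have "(\<integral>\<^sup>+w. ennreal (Dn n w) * indicator (space M) w \<partial>M) = (\<integral>\<^sup>+w. ennreal (Dn n w) \<partial>M)"
    by (rule nn_integral_cong) (simp add: indicator_def)
  also have "c * \<dots> \<le> c * ennreal (1 / real n)" by (intro mult_left_mono ED[OF n nn s]) simp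
  also have "\<dots> = ennreal (1 / K^2)" unfolding c_def using n K
    by (simp add: ennreal_mult[symmetric] field_simps)
  finally have "ennreal (prob B) \<le> ennreal (1 / K^2)" by (simp add: emeasure_eq_measure)
  hence pB: "prob B \<le> 1 / K^2" using K by simp
  have "{w\<in>space M. real n * Dn n w \<le> K^2} = space M - B" unfolding B_def by auto
  thus "prob {w\<in>space M. real n * Dn n w \<le> K^2} \<ge> 1 - 1 / K^2"
    using prob_compl[OF evB] pB by simp
qed

lemma ae_le_S:
  assumes z: "\<forall>k>S. p0 k = 0"
  shows "AE w in M. X i w \<le> S"
proof -
  define N where "N j = (if S < j then {w\<in>space M. X i w = j} else {})" for j
  have Nsets: "range N \<subseteq> sets M" unfolding N_def by auto
  have "emeasure M (N j) = 0" for j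
  proof (cases "S < j")
    case True
    hence "emeasure M (N j) = ennreal (p0 j)" unfolding N_def using X_dist by (simp add: emeasure_eq_measure)
    thus ?thesis using z True by simp
  qed (simp add: N_def)
  hence "emeasure M (\<Union>j. N j) = 0" using Nsets by (intro emeasure_UN_eq_0) auto
  moreover have "(\<Union>j. N j) \<in> sets M" using Nsets by auto
  ultimately have null: "(\<Union>j. N j) \<in> null_sets M" by auto
  show ?thesis
  proof (rule AE_I'[OF null])
    show "{w\<in>space M. \<not> X i w \<le> S} \<subseteq> (\<Union>j. N j)"
      by (auto simp: N_def)
  qed
qed

lemma ae_all_le_S:
  assumes z: "\<forall>k>S. p0 k = 0"
  shows "AE w in M. \<forall>i\<in>{1..n}. X i w \<le> S"
  using ae_le_S[OF z] by (intro eventually_ball_finite) auto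

lemma emp_support:
  assumes "\<forall>i\<in>{1..n}. X i w \<le> S" "n \<ge> 1"
  shows "\<forall>k>S. emp_pmf X n w k = 0" "Fcum (emp_pmf X n w) S = 1"
proof -
  show "\<forall>k>S. emp_pmf X n w k = 0"
  proof (intro allI impI)
    fix k assume "k > S"
    hence "{i\<in>{1..n}. X i w = k} = {}" using assms(1) by force
    thus "emp_pmf X n w k = 0" unfolding emp_pmf_def by simp
  qed
  have "Fcum (emp_pmf X n w) S = (\<Sum>j\<le>S. \<Sum>i\<in>{1..n}. ind i j w) / real n"
    unfolding Fcum_def emp_eq by (simp add: sum_divide_distrib)
  also have "(\<Sum>j\<le>S. \<Sum>i\<in>{1..n}. ind i j w) = (\<Sum>i\<in>{1..n}. \<Sum>j\<le>S. ind i j w)"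
    by (rule sum.swap)
  also have "\<dots> = (\<Sum>i\<in>{1..n}. 1)"
  proof (rule sum.cong[OF refl])
    fix i assume "i \<in> {1..n}"
    hence "X i w \<in> {..S}" using assms(1) by auto
    thus "(\<Sum>j\<le>S. ind i j w) = 1" unfolding ind_def by (simp add: sum.delta')
  qed
  finally show "Fcum (emp_pmf X n w) S = 1" using assms(2) by simp
qed

end


lemma bip2:
  assumes "\<And>\<epsilon>. \<epsilon> > 0 \<Longrightarrow> \<exists>K N. \<forall>n\<ge>N. \<exists>A\<in>sets M. A \<subseteq> space M \<and> 1 - \<epsilon> \<le> measure M A \<and>
       (\<forall>w\<in>A. \<bar>YA n w\<bar> \<le> K \<and> \<bar>YB n w\<bar> \<le> K)"
  shows "bounded_in_prob M YA \<and> bounded_in_prob M YB"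
proof -
  have one: "bounded_in_prob M Y" if h: "\<And>\<epsilon>. \<epsilon> > 0 \<Longrightarrow> \<exists>K N. \<forall>n\<ge>N. \<exists>A\<in>sets M. A \<subseteq> space M \<and> 1 - \<epsilon> \<le> measure M A \<and>
       (\<forall>w\<in>A. \<bar>Y n w\<bar> \<le> K)" for Y
    unfolding bounded_in_prob_def
  proof (intro allI impI)
    fix \<epsilon> :: real assume "\<epsilon> > 0"
    from h[OF this] obtain K N where KN: "\<forall>n\<ge>N. \<exists>A\<in>sets M. A \<subseteq> space M \<and> 1 - \<epsilon> \<le> measure M A \<and> (\<forall>w\<in>A. \<bar>Y n w\<bar> \<le> K)"
      by blast
    show "\<exists>K N. \<forall>n\<ge>N. \<exists>A\<in>sets M. A \<subseteq> {w \<in> space M. \<bar>Y n w\<bar> \<le> K} \<and> 1 - \<epsilon> \<le> measure M A"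
    proof (intro exI allI impI)
      fix n assume "N \<le> n"
      with KN obtain A where "A \<in> sets M" "A \<subseteq> space M" "1 - \<epsilon> \<le> measure M A" "\<forall>w\<in>A. \<bar>Y n w\<bar> \<le> K"
        by blast
      thus "\<exists>A\<in>sets M. A \<subseteq> {w \<in> space M. \<bar>Y n w\<bar> \<le> K} \<and> 1 - \<epsilon> \<le> measure M A" by blast
    qed
  qed
  show ?thesis
  proof
    show "bounded_in_prob M YA"
    proof (rule one)
      fix \<epsilon> :: real assume "\<epsilon> > 0"
      from assms[OF this] show "\<exists>K N. \<forall>n\<ge>N. \<exists>A\<in>sets M. A \<subseteq> space M \<and> 1 - \<epsilon> \<le> measure M A \<and> (\<forall>w\<in>A. \<bar>YA n w\<bar> \<le> K)"
        by meson
    qed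
    show "bounded_in_prob M YB"
    proof (rule one)
      fix \<epsilon> :: real assume "\<epsilon> > 0"
      from assms[OF this] show "\<exists>K N. \<forall>n\<ge>N. \<exists>A\<in>sets M. A \<subseteq> space M \<and> 1 - \<epsilon> \<le> measure M A \<and> (\<forall>w\<in>A. \<bar>YB n w\<bar> \<le> K)"
        by meson
    qed
  qed
qed

theorem theorem1:
  fixes M :: "'a measure" and X :: "nat \<Rightarrow> 'a \<Rightarrow> nat" and p0 :: "nat \<Rightarrow> real"
  assumes "prob_space M"
    and p0_nonneg: "\<And>j. p0 j \<ge> 0"
    and p0_sum: "p0 sums 1"
    and p0_convex: "convex_seq p0"
    and p0_support: "{j. p0 j \<noteq> 0} = UNIV \<or> (\<exists>S::nat. S \<ge> 1 \<and> {j. p0 j \<noteq> 0} = {0..S})"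
    and X_meas: "\<And>i. X i \<in> measurable M (count_space UNIV)"
    and X_indep: "prob_space.indep_vars M (\<lambda>_. count_space UNIV) X UNIV"
    and X_dist: "\<And>i j. measure M {w\<in>space M. X i w = j} = p0 j"
  shows "bounded_in_prob M (\<lambda>n w. sqrt (real n) *
            sup_norm (\<lambda>k. conv_lse (emp_pmf X n w) k - p0 k))
    \<and> (finite {j. p0 j \<noteq> 0} \<longrightarrow>
        bounded_in_prob M (\<lambda>n w. sqrt (real n) *
            sup_norm (\<lambda>k. Fcum (conv_lse (emp_pmf X n w)) k - Fcum p0 k))
      \<and> bounded_in_prob M (\<lambda>n w. sqrt (real n) *
            sup_norm (\<lambda>z. Hcum (conv_lse (emp_pmf X n w)) z - Hcum p0 z)))"
proof -
  interpret setting M X p0 using assms by (simp add: setting_def setting_axioms_def)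
  have nn: "\<And>j. p0 j \<ge> 0" by (rule p0_nonneg)
  have s: "p0 sums 1" by (rule p0_sum)
  have p0C: "p0 \<in> convC" using p0_convex p0_facts(2)[OF nn s] by (simp add: convC_iff)
  have clos: "\<bar>conv_lse (emp_pmf X n w) k - p0 k\<bar> \<le> sqrt (Dn n w)" for n w k
    using lse_coord[OF emp_l2 p0C] unfolding Dn_def by blast
  have Dnn: "Dn n w \<ge> 0" for n w unfolding Dn_def using Dn_summable[OF nn s] by (simp add: suminf_nonneg)
  have sq: "sqrt (real n) * sqrt (Dn n w) \<le> K" if "real n * Dn n w \<le> K^2" "K > 0" for n w K
  proof -
    have "sqrt (real n) * sqrt (Dn n w) = sqrt (real n * Dn n w)" by (simp add: real_sqrt_mult)
    also have "\<dots> \<le> sqrt (K^2)" using that by (intro real_sqrt_le_mono) auto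
    also have "\<dots> = K" using that by simp
    finally show ?thesis .
  qed
  have P1: "bounded_in_prob M (\<lambda>n w. sqrt (real n) * sup_norm (\<lambda>k. conv_lse (emp_pmf X n w) k - p0 k))"
    unfolding bounded_in_prob_def
  proof (intro allI impI)
    fix \<epsilon> :: real assume e: "\<epsilon> > 0"
    define K where "K = sqrt (1 / \<epsilon>)"
    have K: "K > 0" "K^2 = 1 / \<epsilon>" unfolding K_def using e by auto
    show "\<exists>K N. \<forall>n\<ge>N. \<exists>A\<in>sets M. A \<subseteq> {w\<in>space M. \<bar>sqrt (real n) * sup_norm (\<lambda>k. conv_lse (emp_pmf X n w) k - p0 k)\<bar> \<le> K} \<and> 1 - \<epsilon> \<le> measure M A"
    proof (intro exI allI impI)
      fix n :: nat assume n: "1 \<le> n"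
      define A where "A = {w\<in>space M. real n * Dn n w \<le> K^2}"
      have "A \<in> sets M" "prob A \<ge> 1 - 1 / K^2" unfolding A_def using markov[OF n nn s K(1)] by auto
      moreover have "A \<subseteq> {w\<in>space M. \<bar>sqrt (real n) * sup_norm (\<lambda>k. conv_lse (emp_pmf X n w) k - p0 k)\<bar> \<le> K}"
      proof
        fix w assume w: "w \<in> A"
        have "\<bar>sqrt (real n) * sup_norm (\<lambda>k. conv_lse (emp_pmf X n w) k - p0 k)\<bar> \<le> sqrt (real n) * sqrt (Dn n w)"
          using clos by (intro sup_norm_le) auto
        also have "\<dots> \<le> K" using w K unfolding A_def by (intro sq) auto
        finally show "w \<in> {w\<in>space M. \<bar>sqrt (real n) * sup_norm (\<lambda>k. conv_lse (emp_pmf X n w) k - p0 k)\<bar> \<le> K}"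
          using w unfolding A_def by auto
      qed
      ultimately show "\<exists>A\<in>sets M. A \<subseteq> {w\<in>space M. \<bar>sqrt (real n) * sup_norm (\<lambda>k. conv_lse (emp_pmf X n w) k - p0 k)\<bar> \<le> K} \<and> 1 - \<epsilon> \<le> measure M A"
        using K by auto
    qed
  qed
  have P2: "bounded_in_prob M (\<lambda>n w. sqrt (real n) * sup_norm (\<lambda>k. Fcum (conv_lse (emp_pmf X n w)) k - Fcum p0 k))
      \<and> bounded_in_prob M (\<lambda>n w. sqrt (real n) * sup_norm (\<lambda>z. Hcum (conv_lse (emp_pmf X n w)) z - Hcum p0 z))"
    if fin: "finite {j. p0 j \<noteq> 0}"
  proof -
    have "{j. p0 j \<noteq> 0} \<noteq> UNIV" using fin by auto
    hence "\<exists>S::nat. S \<ge> 1 \<and> {j. p0 j \<noteq> 0} = {0..S}" using p0_support by simp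
    then obtain S :: nat where S: "S \<ge> 1" "{j. p0 j \<noteq> 0} = {0..S}" by blast
    have "S \<in> {j. p0 j \<noteq> 0}" using S(2) by simp
    hence "p0 S \<noteq> 0" by simp
    hence p0S: "p0 S > 0" using nn[of S] by linarith
    have z: "\<forall>k>S. p0 k = 0"
    proof (intro allI impI)
      fix k assume k: "S < k"
      show "p0 k = 0"
      proof (rule ccontr)
        assume "p0 k \<noteq> 0"
        hence "k \<in> {0..S}" using S(2) by blast
        thus False using k by simp
      qed
    qed
    have "p0 sums (\<Sum>j\<in>{..S}. p0 j)" by (rule sums_finite) (use z in auto)
    from sums_unique2[OF this s] have F0S: "Fcum p0 S = 1" unfolding Fcum_def by simp
    have F0: "\<forall>k\<ge>S. Fcum p0 k = 1" using Fcum_const[OF z] F0S by simp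
    have key: "\<exists>K N. \<forall>n\<ge>N. \<exists>A\<in>sets M. A \<subseteq> space M \<and> 1 - \<epsilon> \<le> measure M A \<and>
       (\<forall>w\<in>A. \<bar>sqrt (real n) * sup_norm (\<lambda>k. Fcum (conv_lse (emp_pmf X n w)) k - Fcum p0 k)\<bar> \<le> K
           \<and> \<bar>sqrt (real n) * sup_norm (\<lambda>z. Hcum (conv_lse (emp_pmf X n w)) z - Hcum p0 z)\<bar> \<le> K)"
      if e: "\<epsilon> > 0" for \<epsilon>
    proof -
      define K where "K = sqrt (1 / \<epsilon>)"
      have K: "K > 0" "K^2 = 1 / \<epsilon>" unfolding K_def using e by auto
      define N :: nat where "N = nat \<lceil>9 * K^2 / (p0 S)^2\<rceil> + 1"
      have Nbig: "real N > 9 * K^2 / (p0 S)^2" unfolding N_def by linarith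
      have N1: "N \<ge> 1" unfolding N_def by simp
      show ?thesis
      proof (intro exI allI impI)
        fix n assume nN: "N \<le> n"
        have n: "n \<ge> 1" using nN N1 by simp
        define A where "A = {w\<in>space M. real n * Dn n w \<le> K^2} \<inter> {w\<in>space M. \<forall>i\<in>{1..n}. X i w \<le> S}"
        have Asets: "A \<in> sets M" unfolding A_def by measurable
        have ae: "AE w in M. \<forall>i\<in>{1..n}. X i w \<le> S" by (rule ae_all_le_S[OF z])
        have "AE w in M. (w \<in> A) = (w \<in> {w\<in>space M. real n * Dn n w \<le> K^2})"
          using ae by eventually_elim (auto simp: A_def)
        moreover have "{w\<in>space M. real n * Dn n w \<le> K^2} \<in> sets M" by measurable
        ultimately have "measure M A = measure M {w\<in>space M. real n * Dn n w \<le> K^2}"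
          using Asets by (intro measure_eq_AE) auto
        hence Ameas: "1 - \<epsilon> \<le> measure M A" using markov(2)[OF n nn s K(1)] K by simp
        have bnd: "\<bar>sqrt (real n) * sup_norm (\<lambda>k. Fcum (conv_lse (emp_pmf X n w)) k - Fcum p0 k)\<bar> \<le> (real S + 1)^2 * K
           \<and> \<bar>sqrt (real n) * sup_norm (\<lambda>z. Hcum (conv_lse (emp_pmf X n w)) z - Hcum p0 z)\<bar> \<le> (real S + 1)^2 * K"
          if w: "w \<in> A" for w
        proof -
          have wD: "real n * Dn n w \<le> K^2" and wS: "\<forall>i\<in>{1..n}. X i w \<le> S" using w unfolding A_def by auto
          define q where "q = emp_pmf X n w"
          define \<delta> where "\<delta> = sqrt (Dn n w)"
          have d0: "\<delta> \<ge> 0" unfolding \<delta>_def using Dnn by simp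
          have ps: "(p0 S)^2 > 0" using p0S by simp
          have "real n \<ge> real N" using nN by simp
          hence "real n > 9 * K^2 / (p0 S)^2" using Nbig by linarith
          hence "9 * K^2 < real n * (p0 S)^2" using pos_divide_less_eq[OF ps] by blast
          moreover have "9 * (real n * Dn n w) \<le> 9 * K^2" using wD by simp
          ultimately have lt: "9 * (real n * Dn n w) < real n * (p0 S)^2" by (rule le_less_trans[rotated])
          have eq9: "9 * (real n * Dn n w) = real n * (9 * Dn n w)" by (rule mult.left_commute)
          have npos: "real n > 0" using n by simp
          have "real n * (9 * Dn n w) < real n * (p0 S)^2" using lt unfolding eq9 .
          hence lt2: "9 * Dn n w < (p0 S)^2" using mult_less_cancel_left_pos[OF npos] by blast
          have sqD: "\<delta>^2 = Dn n w" unfolding \<delta>_def using Dnn[of n w] by simp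
          have "(3 * \<delta>)^2 = 9 * \<delta>^2" by (simp add: power_mult_distrib)
          hence "(3 * \<delta>)^2 < (p0 S)^2" using lt2 sqD by simp
          hence three: "3 * \<delta> < p0 S" by (rule power2_less_imp_less) (use p0S in simp)
          have cl: "\<forall>k. \<bar>conv_lse q k - p0 k\<bar> \<le> \<delta>" unfolding q_def \<delta>_def using clos by blast
          have Fp: "\<forall>k\<ge>S+1. Fcum (conv_lse q) k = 1"
            unfolding q_def
            by (rule part2_det[OF emp_l2 emp_support(1)[OF wS n] emp_support(2)[OF wS n] z three cl[unfolded q_def]])
          note FH = F_H_bounds[OF cl Fp F0]
          have sqK: "sqrt (real n) * \<delta> \<le> K" unfolding \<delta>_def using wD K by (intro sq) auto
          have sS: "real S + 1 \<le> (real S + 1)^2" by (simp add: power2_eq_square)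
          have "\<bar>sqrt (real n) * sup_norm (\<lambda>k. Fcum (conv_lse q) k - Fcum p0 k)\<bar> \<le> sqrt (real n) * ((real S + 1) * \<delta>)"
            using FH(1) by (rule sup_norm_le)
          also have "\<dots> = (real S + 1) * (sqrt (real n) * \<delta>)" by simp
          also have "\<dots> \<le> (real S + 1) * K" using sqK by (intro mult_left_mono) auto
          also have "\<dots> \<le> (real S + 1)^2 * K" using sS K by (intro mult_right_mono) auto
          finally have b1: "\<bar>sqrt (real n) * sup_norm (\<lambda>k. Fcum (conv_lse q) k - Fcum p0 k)\<bar> \<le> (real S + 1)^2 * K" .
          have "\<bar>sqrt (real n) * sup_norm (\<lambda>z. Hcum (conv_lse q) z - Hcum p0 z)\<bar> \<le> sqrt (real n) * ((real S + 1) * ((real S + 1) * \<delta>))"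
            using FH(2) by (rule sup_norm_le)
          also have "\<dots> = (real S + 1)^2 * (sqrt (real n) * \<delta>)" by (simp add: power2_eq_square)
          also have "\<dots> \<le> (real S + 1)^2 * K" using sqK by (intro mult_left_mono) auto
          finally have b2: "\<bar>sqrt (real n) * sup_norm (\<lambda>z. Hcum (conv_lse q) z - Hcum p0 z)\<bar> \<le> (real S + 1)^2 * K" .
          show ?thesis using b1[unfolded q_def] b2[unfolded q_def] by (rule conjI)
        qed
        have Asp: "A \<subseteq> space M" unfolding A_def by auto
        show "\<exists>A\<in>sets M. A \<subseteq> space M \<and> 1 - \<epsilon> \<le> measure M A \<and>
           (\<forall>w\<in>A. \<bar>sqrt (real n) * sup_norm (\<lambda>k. Fcum (conv_lse (emp_pmf X n w)) k - Fcum p0 k)\<bar> \<le> (real S + 1)^2 * K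
           \<and> \<bar>sqrt (real n) * sup_norm (\<lambda>z. Hcum (conv_lse (emp_pmf X n w)) z - Hcum p0 z)\<bar> \<le> (real S + 1)^2 * K)"
        proof (rule bexI[OF _ Asets], intro conjI ballI)
          show "A \<subseteq> space M" by (rule Asp)
          show "1 - \<epsilon> \<le> measure M A" by (rule Ameas)
        next
          fix w assume "w \<in> A"
          from bnd[OF this] show "\<bar>sqrt (real n) * sup_norm (\<lambda>k. Fcum (conv_lse (emp_pmf X n w)) k - Fcum p0 k)\<bar> \<le> (real S + 1)^2 * K" by (rule conjunct1)
        next
          fix w assume "w \<in> A"
          from bnd[OF this] show "\<bar>sqrt (real n) * sup_norm (\<lambda>z. Hcum (conv_lse (emp_pmf X n w)) z - Hcum p0 z)\<bar> \<le> (real S + 1)^2 * K" by (rule conjunct2)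
        qed
      qed
    qed
    show ?thesis
      by (rule bip2[where YA="\<lambda>n w. sqrt (real n) * sup_norm (\<lambda>k. Fcum (conv_lse (emp_pmf X n w)) k - Fcum p0 k)"
        and YB="\<lambda>n w. sqrt (real n) * sup_norm (\<lambda>z. Hcum (conv_lse (emp_pmf X n w)) z - Hcum p0 z)"]) (rule key)
  qed
  show ?thesis using P1 P2 by blast
qed

end
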